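(* In Setup B, let $1\le i\le m-1$ with $\gcd(i,m)=1$, $1\le j\le f(\tau_{-i})$ and $1\le j'\le f(\tau_{pi})$. Then the coefficient of $\omega_{-pi,j'}$ in $\psi'_{\tau_i}(\zeta_{i,j})$ equals $$-\sum_{k=1}^r e_{i,k}\, r_{i,j,k}\, q_{j',k},$$ where $e_{i,k}=\lfloor p\langle ia_k/m\rangle\rfloor$, $q_{j',k}$ is the coefficient of $x^{j'-1}$ in $\prod_{s\ne k}(x-x_s)$, and $r_{i,j,k}$ is the residue at $x=0$ of the rational function $\prod_{s=1}^r(x-x_s)^{e_{i,s}}\big/\big(x^{pj}(x-x_k)\big)$, namely $$r_{i,j,k}=(-1)^N\sum_{n_1+\dots+n_r=N}\binom{e_{i,1}}{n_1}\cdots\binom{e_{i,k}-1}{n_k}\cdots\binom{e_{i,r}}{n_r}x_1^{n_1}\cdots x_r^{n_r},\qquad N=\sum_{s=1}^r e_{i,s}-pj.$$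
   Context: Setup B. Let $m\ge2$, $r\ge3$, integers $1\le a_k\le m-1$ ($1\le k\le r$) with $\sum a_k\equiv0\pmod m$ and $\gcd(a_1,\dots,a_r,m)=1$. Let $p$ be a prime, $p\nmid m$, $k_0=\overline{\mathbb{F}}_p$, $x_1,\dots,x_r\in k_0$ distinct, and $C$ the smooth projective curve normalizing $y^m=\prod_k(x-x_k)^{a_k}$, with $G=\mathbb{Z}/m$ acting on $y$ by a primitive $m$-th root of unity $\zeta$; $\pi:C\to\mathbb{P}^1$ is the $x$-coordinate. Characters $\tau_i(a)=\zeta^{ia}$, $i\in\mathbb{Z}/m$; $p\tau_i:=\tau_{pi}$, $\tau_i^*:=\tau_{-i}$. $\langle t\rangle$ is the fractional part, and $f(\tau_i)=-1+\sum_k\langle -ia_k/m\rangle$ for $i\not\equiv0$ (so $f(\tau_i^* )=f(\tau_{-i})=-1+\sum_k\langle ia_k/m\rangle$). Put $v_i=y^i/\prod_k(x-x_k)^{\lfloor ia_k/m\rfloor}$ (indices $i$ read mod $m$ in $\{1,\dots,m-1\}$). Let $U=\pi^{-1}(\mathbb{P}^1\setminus\{\infty\})$, $V=\pi^{-1}(\mathbb{P}^1\setminus\{0\})$, and compute $Q=H^1(C,\mathcal{O}_C)=\mathcal{O}_C(U\cap V)/(\mathcal{O}_C(U)+\mathcal{O}_C(V))$. Then $\zeta_{i,j}:=[v_i/x^j]$, $1\le j\le f(\tau_{-i})$, is a basis of the $\tau_i$-isotypic part $Q_{\tau_i}$, and $\omega_{i,j}:=x^{j-1}dx/v_i$, $1\le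 j\le f(\tau_{-i})$, are regular differentials on $C$. Let $\iota:Q\to\mathcal{O}_C(U\cap V)$ be the $k_0$-linear map $\zeta_{i,j}\mapsto v_i/x^j$; then $\mathcal{O}_C(U\cap V)=\mathcal{O}_C(U)\oplus\iota(Q)\oplus\mathcal{O}_C(V)$, and let $\pi_1$ be the projection onto $\mathcal{O}_C(U)$. For $\gcd(i,m)=1$ and $\alpha\in Q_{\tau_i}$, set $f_1=\pi_1(\iota(\alpha)^p)\in\mathcal{O}_C(U)$; then $df_1=P(x)\,dx/v_{-pi}$ for a polynomial $P$, and $\psi'_{\tau_i}(\alpha):=\sum_{k=1}^{f(\tau_{pi})}c_k\,\omega_{-pi,k}$ where $c_k$ is the coefficient of $x^{k-1}$ in $P$ (the "coefficient of $\omega_{-pi,k}$ in $df_1$"). *)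

theory Defs
  imports "HOL-Computational_Algebra.Computational_Algebra"
begin

text \<open>The function field of C is
  k0(x)[y]/(y^m - h(x)), h = prod_k (x - x_k)^(a_k).  Every element of the
  tau_n-isotypic part (0 <= n < m) is uniquely R * y^n with R in k0(x);
  we represent such an element by the pair (n, R), R :: 'k poly fract.\<close>

definition hpoly :: "nat \<Rightarrow> (nat \<Rightarrow> nat) \<Rightarrow> (nat \<Rightarrow> 'k::field) \<Rightarrow> 'k poly" where
  "hpoly r a x = (\<Prod>k\<in>{1..r}. [:- x k, 1:] ^ a k)"

definition Xf :: "'k::field poly fract" where
  "Xf = Fract [:0, 1:] 1"

text \<open>v_n = vcoef n * y^n, i.e. y^n / prod_k (x - x_k)^floor(n a_k / m).\<close>
definition vcoef :: "nat \<Rightarrow> nat \<Rightarrow> (nat \<Rightarrow> nat) \<Rightarrow> (nat \<Rightarrow> 'k::field) \<Rightarrow> nat \<Rightarrow> 'k poly fract" where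
  "vcoef m r a x n = inverse (Fract (\<Prod>k\<in>{1..r}. [:- x k, 1:] ^ ((n * a k) div m)) 1)"

text \<open>(R y^n)^m = R^m h^n lies in k0(x); R y^n is integral over a (normal) subring
  A of k0(x) iff R^m h^n lies in A.  Regular functions on U, V, U\<inter>V are the
  integral closures of k0[x], k0[1/x], k0[x,1/x].\<close>
definition mpow :: "nat \<Rightarrow> nat \<Rightarrow> (nat \<Rightarrow> nat) \<Rightarrow> (nat \<Rightarrow> 'k::field) \<Rightarrow> nat \<Rightarrow> 'k poly fract \<Rightarrow> 'k poly fract" where
  "mpow m r a x n R = R ^ m * Fract (hpoly r a x ^ n) 1"

definition inU :: "nat \<Rightarrow> nat \<Rightarrow> (nat \<Rightarrow> nat) \<Rightarrow> (nat \<Rightarrow> 'k::field) \<Rightarrow> nat \<Rightarrow> 'k poly fract \<Rightarrow> bool" where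
  "inU m r a x n R \<longleftrightarrow> (\<exists>q. mpow m r a x n R = Fract q 1)"

definition inV :: "nat \<Rightarrow> nat \<Rightarrow> (nat \<Rightarrow> nat) \<Rightarrow> (nat \<Rightarrow> 'k::field) \<Rightarrow> nat \<Rightarrow> 'k poly fract \<Rightarrow> bool" where
  "inV m r a x n R \<longleftrightarrow> (\<exists>q e. degree q \<le> e \<and> mpow m r a x n R = Fract q ([:0, 1:] ^ e))"

definition inUV :: "nat \<Rightarrow> nat \<Rightarrow> (nat \<Rightarrow> nat) \<Rightarrow> (nat \<Rightarrow> 'k::field) \<Rightarrow> nat \<Rightarrow> 'k poly fract \<Rightarrow> bool" where
  "inUV m r a x n R \<longleftrightarrow> (\<exists>q e. mpow m r a x n R = Fract q ([:0, 1:] ^ e))"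

definition ftau :: "nat \<Rightarrow> nat \<Rightarrow> (nat \<Rightarrow> nat) \<Rightarrow> int \<Rightarrow> int" where
  "ftau m r a t = -1 + (\<Sum>k\<in>{1..r}. (- t * int (a k)) mod int m) div int m"

text \<open>The projection pi_1 onto O(U), on the tau_n-isotypic component, w.r.t.
  O(U\<inter>V) = O(U) + iota(Q) + O(V), iota(Q)_{tau_n} spanned by v_n / x^j.\<close>
definition proj1 :: "nat \<Rightarrow> nat \<Rightarrow> (nat \<Rightarrow> nat) \<Rightarrow> (nat \<Rightarrow> 'k::field) \<Rightarrow> nat \<Rightarrow> 'k poly fract \<Rightarrow> 'k poly fract" where
  "proj1 m r a x n R = (THE U. inU m r a x n U \<and>
      (\<exists>c W. inV m r a x n W \<and>
         R = U + (\<Sum>j\<in>{1..nat (ftau m r a (- int n))}. Fract [:c j:] 1 * vcoef m r a x n / Xf ^ j) + W))"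

definition fract_deriv :: "'k::field poly fract \<Rightarrow> 'k poly fract" where
  "fract_deriv R = (let (u, v) = (SOME (u, v). v \<noteq> 0 \<and> R = Fract u v)
                     in Fract (pderiv u * v - u * pderiv v) (v * v))"

text \<open>d(R y^n)/dx = (R' + R * n h' / (m h)) y^n, since m y^(m-1) dy = h' dx.\<close>
definition dhom :: "nat \<Rightarrow> nat \<Rightarrow> (nat \<Rightarrow> nat) \<Rightarrow> (nat \<Rightarrow> 'k::field) \<Rightarrow> nat \<Rightarrow> 'k poly fract \<Rightarrow> 'k poly fract" where
  "dhom m r a x n R = fract_deriv R +
     R * Fract (smult (of_nat n) (pderiv (hpoly r a x))) (smult (of_nat m) (hpoly r a x))"

text \<open>Coefficient of omega_{-pi,j'} in psi'_{tau_i}(zeta_{i,j}):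
  iota(zeta_{i,j}) = v_i / x^j; its p-th power is R y^(pi mod m) with
  R = (vcoef i / x^j)^p * h^(pi div m); f_1 = pi_1 of it; df_1 = D y^(n') dx,
  and P = D * y^(n') * v_{-pi}.\<close>
definition psi_coeff :: "nat \<Rightarrow> nat \<Rightarrow> (nat \<Rightarrow> nat) \<Rightarrow> (nat \<Rightarrow> 'k::field) \<Rightarrow> nat \<Rightarrow> nat \<Rightarrow> nat \<Rightarrow> nat \<Rightarrow> 'k" where
  "psi_coeff m r a x p i j j' =
    (let n1 = (p * i) mod m;
         R = (vcoef m r a x i / Xf ^ j) ^ p * Fract (hpoly r a x ^ ((p * i) div m)) 1;
         F = proj1 m r a x n1 R;
         D = dhom m r a x n1 F;
         n2 = (m - n1) mod m;
         Pf = D * vcoef m r a x n2 * Fract (hpoly r a x ^ ((n1 + n2) div m)) 1;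
         P = (THE P. Pf = Fract P 1)
     in coeff P (j' - 1))"

definition e_ik :: "nat \<Rightarrow> (nat \<Rightarrow> nat) \<Rightarrow> nat \<Rightarrow> nat \<Rightarrow> nat \<Rightarrow> nat" where
  "e_ik m a p i k = (p * ((i * a k) mod m)) div m"

definition q_coeff :: "nat \<Rightarrow> (nat \<Rightarrow> 'k::field) \<Rightarrow> nat \<Rightarrow> nat \<Rightarrow> 'k" where
  "q_coeff r x j' k = coeff (\<Prod>s\<in>{1..r} - {k}. [:- x s, 1:]) (j' - 1)"

definition r_coeff :: "nat \<Rightarrow> nat \<Rightarrow> (nat \<Rightarrow> nat) \<Rightarrow> (nat \<Rightarrow> 'k::field) \<Rightarrow> nat \<Rightarrow> nat \<Rightarrow> nat \<Rightarrow> nat \<Rightarrow> 'k" where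
  "r_coeff m r a x p i j k =
    (let N = (\<Sum>s\<in>{1..r}. int (e_ik m a p i s)) - int (p * j)
     in (-1) ^ nat N *
        (\<Sum>n\<in>{n :: nat \<Rightarrow> nat. (\<forall>s. s \<notin> {1..r} \<longrightarrow> n s = 0) \<and> int (sum n {1..r}) = N}.
           \<Prod>s\<in>{1..r}. of_int \<lfloor>(of_int (int (e_ik m a p i s) - (if s = k then 1 else 0)) :: rat) gchoose n s\<rfloor> * x s ^ n s))"

end

theory Submission
  imports Defs
begin


lemma order_power: "p \<noteq> 0 \<Longrightarrow> order c (p ^ n) = n * order c p"
  by (induct n) (auto simp: order_mult)

lemma power_fract: "Fract (a::'a::idom) b ^ n = Fract (a ^ n) (b ^ n)"
  by (induct n) (simp_all add: One_fract_def)

lemma char_lemma: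
  fixes T :: "'k::alg_closed_field poly fract"
  assumes m: "m > 0" and E: "E \<noteq> 0" and ord: "\<forall>c. c \<noteq> 0 \<longrightarrow> order c E < m"
    and eq: "T ^ m * Fract E 1 = Fract q ([:0,1:] ^ e)"
  shows "\<exists>u k. T = Fract u ([:0,1:] ^ k) \<and> u ^ m * E * [:0,1:] ^ e = q * [:0,1:] ^ (m * k)
             \<and> (k > 0 \<longrightarrow> poly u 0 \<noteq> 0)"
proof (cases "T = 0")
  case True
  then have "Fract q ([:0,1:] ^ e) = 0" using eq m by (simp add: zero_power)
  then have "q = 0" by (simp add: Zero_fract_def eq_fract)
  then show ?thesis using True by (intro exI[of _ 0] exI[of _ 0]) (simp add: Zero_fract_def m)
next
  case False
  have "\<exists>d u v. v \<noteq> 0 \<and> T = Fract u v \<and> degree v = d" by (cases T) auto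
  then obtain d0 where "\<exists>u v. v \<noteq> 0 \<and> T = Fract u v \<and> degree v = d0"
     "\<And>d'. d' < d0 \<Longrightarrow> \<not>(\<exists>u v. v \<noteq> 0 \<and> T = Fract u v \<and> degree v = d')"
    using exists_least_iff[of "\<lambda>d. \<exists>u v. v \<noteq> 0 \<and> T = Fract u v \<and> degree v = d"] by blast
  then obtain u v where T: "T = Fract u v" and v0: "v \<noteq> 0" and dv: "degree v = d0"
    and mn0: "\<And>d'. d' < d0 \<Longrightarrow> \<not>(\<exists>u v. v \<noteq> 0 \<and> T = Fract u v \<and> degree v = d')" by blast
  have mn: "\<And>u' v'. v' \<noteq> 0 \<Longrightarrow> T = Fract u' v' \<Longrightarrow> degree v' \<ge> d0"
    using mn0 not_le by blast
  have cop: "\<not> (poly u c = 0 \<and> poly v c = 0)" for c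
  proof
    assume "poly u c = 0 \<and> poly v c = 0"
    then obtain u1 v1 where "u = [:-c,1:] * u1" "v = [:-c,1:] * v1" by (meson dvdE poly_eq_0_iff_dvd)
    moreover have "v1 \<noteq> 0" using v0 calculation by auto
    moreover have "T = Fract u1 v1" using T calculation mult_fract_cancel[of "[:-c,1:]" u1 v1] by simp
    moreover have "degree ([:-c,1:] * v1) = degree v1 + 1" using \<open>v1 \<noteq> 0\<close> by (subst degree_mult_eq) auto
    ultimately have "degree v = degree v1 + 1" "v1 \<noteq> 0" "T = Fract u1 v1" by simp_all
    then show False using mn dv by fastforce
  qed
  have u0: "u \<noteq> 0" using False T by (auto simp: fract_collapse)
  have "Fract (u ^ m * E) (v ^ m) = Fract q ([:0,1:] ^ e)"
    using eq T by (simp add: power_fract)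
  then have E1: "u ^ m * E * [:0,1:] ^ e = q * v ^ m"
    using v0 by (simp add: eq_fract)
  have q0: "q \<noteq> 0" using E1 u0 E by auto
  have noroot: "poly v c \<noteq> 0" if "c \<noteq> 0" for c
  proof
    assume vc: "poly v c = 0"
    have "poly u c \<noteq> 0"
    proof
      assume "poly u c = 0"
      then show False using cop vc by blast
    qed
    then have ou: "order c u = 0" by (simp add: order_0I)
    have "order c [:0,1:] = 0" using that by (intro order_0I) simp
    then have "order c (u ^ m * E * [:0,1:] ^ e) = order c E"
      using u0 E ou by (simp add: order_mult order_power)
    also have "\<dots> < m" using ord that by auto
    finally have "order c (q * v ^ m) < m" using E1 by simp
    moreover have "order c (q * v ^ m) = order c q + m * order c v"
      using q0 v0 by (simp add: order_mult order_power)
    moreover have "order c v > 0" using vc v0 by (simp add: order_gt_0_iff)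
    moreover have "m * order c v \<ge> m" using \<open>order c v > 0\<close> by simp
    ultimately show False by linarith
  qed
  obtain w where w: "v = [:-0,1:] ^ order 0 v * w" "\<not> [:-0,1:] dvd w"
    using order_decomp[OF v0, of 0] by blast
  define k where "k = order 0 v"
  have w0: "w \<noteq> 0" using w v0 by auto
  have "degree w = 0"
  proof (rule ccontr)
    assume "degree w \<noteq> 0"
    then obtain c where c: "poly w c = 0" using alg_closed_imp_poly_has_root by blast
    show False
    proof (cases "c = 0")
      case True then show False using w(2) c by (simp add: poly_eq_0_iff_dvd)
    next
      case False
      have "poly v c = poly ([:-0,1:] ^ order 0 v) c * poly w c" using w(1) by (metis poly_mult)
      then show False using noroot[OF False] c by simp
    qed
  qed
  then obtain d where d: "w = [:d:]" by (metis degree_eq_zeroE)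
  have d0: "d \<noteq> 0" using d w0 by auto
  have vv: "v = smult d ([:0,1:] ^ k)" using w(1) d by (simp add: k_def)
  define u' where "u' = smult (inverse d) u"
  have uu: "u = smult d u'" using d0 by (simp add: u'_def)
  have "T = Fract u' ([:0,1:] ^ k)"
    unfolding T vv uu using mult_fract_cancel[of "[:d:]" u' "[:0,1:] ^ k"] d0 by simp
  moreover have "u' ^ m * E * [:0,1:] ^ e = q * [:0,1:] ^ (m * k)"
  proof -
    have "smult (d ^ m) (u' ^ m * E * [:0,1:] ^ e) = smult (d ^ m) (q * [:0,1:] ^ (m * k))"
    proof -
      have "smult (d ^ m) (u' ^ m * E * [:0,1:] ^ e) = u ^ m * E * [:0,1:] ^ e"
        unfolding uu by (simp add: smult_power)
      also have "\<dots> = q * v ^ m" by (rule E1)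
      also have "\<dots> = smult (d ^ m) (q * [:0,1:] ^ (m * k))"
        unfolding vv by (simp add: smult_power power_mult mult.commute[of m k])
      finally show ?thesis .
    qed
    then have "smult (inverse (d ^ m)) (smult (d ^ m) (u' ^ m * E * [:0,1:] ^ e)) =
       smult (inverse (d ^ m)) (smult (d ^ m) (q * [:0,1:] ^ (m * k)))" by simp
    then show ?thesis using d0 by (simp only: smult_smult) (simp add: field_simps)
  qed
  moreover have "k > 0 \<longrightarrow> poly u' 0 \<noteq> 0"
  proof
    assume "k > 0"
    then have "[:0,1:] dvd v" unfolding vv by (simp add: dvd_smult)
    then have "\<not> [:0,1:] dvd u" using cop[of 0] by (auto simp: poly_eq_0_iff_dvd)
    then have "poly u 0 \<noteq> 0" by (auto simp: poly_eq_0_iff_dvd)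
    then show "poly u' 0 \<noteq> 0" using d0 unfolding uu by auto
  qed
  ultimately show ?thesis by blast
qed


definition lin :: "(nat \<Rightarrow> 'k::field) \<Rightarrow> nat \<Rightarrow> 'k poly" where
  "lin x k = [:- x k, 1:]"

definition PP :: "(nat \<Rightarrow> 'k::field) \<Rightarrow> nat set \<Rightarrow> (nat \<Rightarrow> nat) \<Rightarrow> 'k poly" where
  "PP x S d = (\<Prod>k\<in>S. lin x k ^ d k)"

lemma PP_mult: "PP x S d1 * PP x S d2 = PP x S (\<lambda>k. d1 k + d2 k)"
  by (simp add: PP_def power_add prod.distrib)

lemma PP_power: "PP x S d ^ n = PP x S (\<lambda>k. n * d k)"
  by (simp add: PP_def prod_power_distrib flip: power_mult) (simp add: mult.commute)

lemma PP_nonzero: "PP x S d \<noteq> 0"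
  by (cases "finite S") (auto simp: PP_def lin_def prod_zero_iff)

lemma lin_nonzero [simp]: "lin x k \<noteq> 0"
  by (simp add: lin_def)

lemma PP_cong: "(\<And>k. k \<in> S \<Longrightarrow> d1 k = d2 k) \<Longrightarrow> PP x S d1 = PP x S d2"
  by (simp add: PP_def)

lemma degree_PP: "finite S \<Longrightarrow> degree (PP x S d) = (\<Sum>k\<in>S. d k)"
  unfolding PP_def lin_def
  by (subst degree_prod_eq_sum_degree) (auto simp: degree_linear_power)

lemma order_lin: "order c (lin x k) = (if x k = c then 1 else 0)"
  using order_power_n_n[of c 1] by (auto simp: lin_def intro!: order_0I)

lemma order_PP: "finite S \<Longrightarrow> order c (PP x S d) = (\<Sum>k\<in>S. if x k = c then d k else 0)"
proof (induct S rule: finite_induct)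
  case empty then show ?case by (simp add: PP_def)
next
  case (insert a S)
  have "PP x (insert a S) d = lin x a ^ d a * PP x S d"
    using insert by (simp add: PP_def)
  moreover have "lin x a ^ d a \<noteq> 0" by simp
  ultimately have "order c (PP x (insert a S) d) = order c (lin x a ^ d a) + order c (PP x S d)"
    using PP_nonzero[of x S d] by (simp add: order_mult)
  also have "order c (lin x a ^ d a) = (if x a = c then d a else 0)"
    by (subst order_power) (auto simp: order_lin)
  finally show ?case using insert by simp
qed

lemma order_PP_less:
  assumes "finite S" "inj_on x S" "\<forall>k\<in>S. d k < m" "m > 0"
  shows "order c (PP x S d) < m"
proof (cases "\<exists>k\<in>S. x k = c")
  case True
  then obtain k0 where k0: "k0 \<in> S" "x k0 = c" by blast
  have "(\<Sum>k\<in>S. if x k = c then d k else 0) = (\<Sum>k\<in>S. if k = k0 then d k else 0)"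
    using assms(2) k0 by (intro sum.cong) (auto dest: inj_onD)
  also have "\<dots> = d k0" using k0 assms(1) by simp
  finally show ?thesis using order_PP[OF assms(1), of c x d] assms(3) k0 by simp
next
  case False
  then show ?thesis using order_PP[OF assms(1), of c x d] assms by simp
qed

lemma PP_remove:
  assumes "finite S" "k \<in> S"
  shows "PP x S d = lin x k ^ d k * PP x (S - {k}) d"
  using assms by (simp add: PP_def prod.remove)

lemma pderiv_PP:
  assumes "finite S"
  shows "pderiv (PP x S d) = (\<Sum>k\<in>S. smult (of_nat (d k)) (PP x S (\<lambda>s. if s = k then d s - 1 else d s)))"
proof -
  have "pderiv (PP x S d) = (\<Sum>k\<in>S. (\<Prod>s\<in>S - {k}. lin x s ^ d s) * pderiv (lin x k ^ d k))"
    unfolding PP_def by (rule pderiv_prod)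
  also have "\<dots> = (\<Sum>k\<in>S. smult (of_nat (d k)) (PP x S (\<lambda>s. if s = k then d s - 1 else d s)))"
  proof (intro sum.cong refl)
    fix k assume k: "k \<in> S"
    have "PP x S (\<lambda>s. if s = k then d s - 1 else d s) = lin x k ^ (d k - 1) * PP x (S - {k}) d"
      using PP_remove[OF assms k, of x "\<lambda>s. if s = k then d s - 1 else d s"]
      by (simp add: PP_def)
    then show "(\<Prod>s\<in>S - {k}. lin x s ^ d s) * pderiv (lin x k ^ d k) =
        smult (of_nat (d k)) (PP x S (\<lambda>s. if s = k then d s - 1 else d s))"
      by (simp add: pderiv_power PP_def lin_def pderiv_pCons mult_ac)
  qed
  finally show ?thesis .
qed


lemma split_shift: "(G::'a::field poly) = monom 1 N * poly_shift N G + poly_cutoff N G"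
  by (rule poly_eqI) (auto simp: coeff_monom_mult coeff_poly_shift coeff_poly_cutoff)

lemma shift_pderiv:
  assumes "(of_nat N :: 'a::field) = 0"
  shows "poly_shift N (pderiv (G :: 'a poly)) = pderiv (poly_shift N G)"
proof (rule poly_eqI)
  fix i
  have "(of_nat (Suc (i + N)) :: 'a) = of_nat (Suc i) + of_nat N" by simp
  then have "(of_nat (Suc (i + N)) :: 'a) = of_nat (Suc i)" using assms by simp
  then show "coeff (poly_shift N (pderiv G)) i = coeff (pderiv (poly_shift N G)) i"
    by (simp add: coeff_poly_shift coeff_pderiv)
qed

lemma shift_add: "poly_shift N (p + q) = poly_shift N p + poly_shift N q"
  by (rule poly_eqI) (simp add: coeff_poly_shift)

lemma shift_smult: "poly_shift N (smult c p) = smult c (poly_shift N p)"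
  by (rule poly_eqI) (simp add: coeff_poly_shift)

lemma shift_sum: "poly_shift N (\<Sum>k\<in>S. f k) = (\<Sum>k\<in>S. poly_shift N (f k))"
  by (induct S rule: infinite_finite_induct) (simp_all add: shift_add)

lemma shift_lin:
  assumes "N \<ge> 1"
  shows "poly_shift N ([:-c,1:] * (Q::'a::field poly)) = [:-c,1:] * poly_shift N Q + [:coeff Q (N - 1):]"
proof (rule poly_eqI)
  fix i
  show "coeff (poly_shift N ([:-c,1:] * Q)) i = coeff ([:-c,1:] * poly_shift N Q + [:coeff Q (N - 1):]) i"
    using assms by (cases i) (auto simp: coeff_poly_shift coeff_pCons Suc_diff_le split: nat.split)
qed

lemma partE:
  fixes x :: "nat \<Rightarrow> 'k::field"
  assumes S: "finite S" and N: "N \<ge> 1" "(of_nat N :: 'k) = 0"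
  shows "(\<Prod>s\<in>S. lin x s) * pderiv (poly_shift N (PP x S e))
           - (\<Sum>k\<in>S. smult (of_nat (e k)) (poly_shift N (PP x S e) * (\<Prod>s\<in>S - {k}. lin x s)))
         = - (\<Sum>k\<in>S. smult (of_nat (e k) * coeff (PP x S (\<lambda>s. if s = k then e s - 1 else e s)) (N - 1))
                         (\<Prod>s\<in>S - {k}. lin x s))"
proof -
  define G where "G = PP x S e"
  define Gk where "Gk k = PP x S (\<lambda>s. if s = k then e s - 1 else e s)" for k
  define Hk where "Hk k = (\<Prod>s\<in>S - {k}. lin x s)" for k
  define H where "H = (\<Prod>s\<in>S. lin x s)"
  have dP0: "pderiv (poly_shift N G) = (\<Sum>k\<in>S. smult (of_nat (e k)) (poly_shift N (Gk k)))"
    unfolding G_def Gk_def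
    by (simp add: shift_pderiv[OF N(2), symmetric] pderiv_PP[OF S] shift_sum shift_smult)
  have trm: "smult (of_nat (e k)) (H * poly_shift N (Gk k)) - smult (of_nat (e k)) (poly_shift N G * Hk k)
      = - smult (of_nat (e k) * coeff (Gk k) (N - 1)) (Hk k)" if k: "k \<in> S" for k
  proof (cases "e k = 0")
    case True then show ?thesis by simp
  next
    case False
    have "G = lin x k ^ e k * PP x (S - {k}) e" unfolding G_def by (rule PP_remove[OF S k])
    moreover have "Gk k = lin x k ^ (e k - 1) * PP x (S - {k}) e"
      unfolding Gk_def using PP_remove[OF S k, of x "\<lambda>s. if s = k then e s - 1 else e s"]
      by (simp add: PP_def)
    ultimately have GG: "G = lin x k * Gk k" using False
      by (metis (no_types, lifting) Suc_diff_1 mult.assoc not_gr0 power_Suc)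
    have HH: "H = lin x k * Hk k" unfolding H_def Hk_def using S k by (simp add: prod.remove)
    have P0: "poly_shift N G = lin x k * poly_shift N (Gk k) + [:coeff (Gk k) (N - 1):]"
      unfolding GG lin_def by (rule shift_lin[OF N(1)])
    show ?thesis unfolding HH P0
      by (simp add: algebra_simps smult_add_right flip: smult_smult)
  qed
  have "H * pderiv (poly_shift N G) - (\<Sum>k\<in>S. smult (of_nat (e k)) (poly_shift N G * Hk k))
      = (\<Sum>k\<in>S. smult (of_nat (e k)) (H * poly_shift N (Gk k)) - smult (of_nat (e k)) (poly_shift N G * Hk k))"
    unfolding dP0 by (simp add: sum_distrib_left sum_subtractf mult_smult_right)
  also have "\<dots> = (\<Sum>k\<in>S. - smult (of_nat (e k) * coeff (Gk k) (N - 1)) (Hk k))"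
    by (rule sum.cong) (simp_all add: trm)
  finally show ?thesis unfolding G_def Gk_def Hk_def H_def by (simp add: sum_negf)
qed


lemma lin_pow_expand:
  "[:-c,1:] ^ d = (\<Sum>k\<le>d. monom (of_nat (d choose k) * (-c) ^ k) (d - k))"
proof -
  have "[:-c,1:] = [:-c:] + monom 1 1" by (simp add: monom_altdef)
  then have "[:-c,1:] ^ d = (\<Sum>k\<le>d. of_nat (d choose k) * [:-c:] ^ k * monom 1 1 ^ (d - k))"
    by (simp add: binomial_ring)
  also have "\<dots> = (\<Sum>k\<le>d. monom (of_nat (d choose k) * (-c) ^ k) (d - k))"
    by (intro sum.cong refl) (simp add: of_nat_poly poly_const_pow monom_power smult_monom flip: smult_monom, simp add: smult_monom mult.commute)
  finally show ?thesis .
qed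

lemma prod_monom: "finite S \<Longrightarrow> (\<Prod>s\<in>S. monom (c s) (e s)) = monom (\<Prod>s\<in>S. c s) (\<Sum>s\<in>S. e s)"
  by (induct S rule: finite_induct) (simp_all add: mult_monom)

lemma PP_expand:
  assumes "finite S"
  shows "PP x S d = (\<Sum>g\<in>PiE S (\<lambda>s. {..d s}).
            monom (\<Prod>s\<in>S. of_nat (d s choose g s) * (- x s) ^ g s) (\<Sum>s\<in>S. d s - g s))"
proof -
  have "PP x S d = (\<Prod>s\<in>S. \<Sum>k\<le>d s. monom (of_nat (d s choose k) * (- x s) ^ k) (d s - k))"
    unfolding PP_def lin_def by (simp add: lin_pow_expand)
  also have "\<dots> = (\<Sum>g\<in>PiE S (\<lambda>s. {..d s}). \<Prod>s\<in>S. monom (of_nat (d s choose g s) * (- x s) ^ g s) (d s - g s))"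
    by (rule prod_sum_PiE) (use assms in auto)
  also have "\<dots> = (\<Sum>g\<in>PiE S (\<lambda>s. {..d s}).
            monom (\<Prod>s\<in>S. of_nat (d s choose g s) * (- x s) ^ g s) (\<Sum>s\<in>S. d s - g s))"
    by (intro sum.cong refl prod_monom assms)
  finally show ?thesis .
qed

lemma coeff_PP:
  assumes S: "finite S" and t: "t \<le> sum d S"
  shows "coeff (PP x S d) t = (\<Sum>g\<in>{g\<in>PiE S (\<lambda>s. {..d s}). sum g S = sum d S - t}.
            \<Prod>s\<in>S. of_nat (d s choose g s) * (- x s) ^ g s)"
proof -
  have "coeff (PP x S d) t = (\<Sum>g\<in>PiE S (\<lambda>s. {..d s}).
     if (\<Sum>s\<in>S. d s - g s) = t then (\<Prod>s\<in>S. of_nat (d s choose g s) * (- x s) ^ g s) else 0)"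
    by (simp add: PP_expand[OF S] coeff_sum coeff_monom)
  also have "\<dots> = (\<Sum>g\<in>PiE S (\<lambda>s. {..d s}).
     if sum g S = sum d S - t then (\<Prod>s\<in>S. of_nat (d s choose g s) * (- x s) ^ g s) else 0)"
  proof (intro sum.cong refl)
    fix g assume g: "g \<in> PiE S (\<lambda>s. {..d s})"
    then have le: "\<forall>s\<in>S. g s \<le> d s" by auto
    then have "(\<Sum>s\<in>S. d s - g s) = sum d S - sum g S" by (simp add: sum_subtractf_nat)
    moreover have "sum g S \<le> sum d S" using le by (intro sum_mono) auto
    ultimately have "((\<Sum>s\<in>S. d s - g s) = t) = (sum g S = sum d S - t)" using t by auto
    then show "(if (\<Sum>s\<in>S. d s - g s) = t then (\<Prod>s\<in>S. of_nat (d s choose g s) * (- x s) ^ g s) else 0) =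
               (if sum g S = sum d S - t then (\<Prod>s\<in>S. of_nat (d s choose g s) * (- x s) ^ g s) else 0)"
      by simp
  qed
  also have "\<dots> = (\<Sum>g\<in>{g\<in>PiE S (\<lambda>s. {..d s}). sum g S = sum d S - t}.
            \<Prod>s\<in>S. of_nat (d s choose g s) * (- x s) ^ g s)"
    by (rule sum.inter_filter[symmetric]) (use S in \<open>auto intro: finite_PiE\<close>)
  finally show ?thesis .
qed

lemma finite_fun_set:
  assumes "finite S"
  shows "finite {n :: nat \<Rightarrow> nat. (\<forall>s. s \<notin> S \<longrightarrow> n s = 0) \<and> sum n S = K}"
proof (rule finite_subset)
  show "{n :: nat \<Rightarrow> nat. (\<forall>s. s \<notin> S \<longrightarrow> n s = 0) \<and> sum n S = K}
        \<subseteq> (\<lambda>g s. if s \<in> S then g s else 0) ` PiE S (\<lambda>_. {..K})"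
  proof
    fix n assume n: "n \<in> {n :: nat \<Rightarrow> nat. (\<forall>s. s \<notin> S \<longrightarrow> n s = 0) \<and> sum n S = K}"
    have "restrict n S \<in> PiE S (\<lambda>_. {..K})"
      using n member_le_sum[of _ S n] assms by auto
    moreover have "n = (\<lambda>s. if s \<in> S then restrict n S s else 0)" using n by auto
    ultimately show "n \<in> (\<lambda>g s. if s \<in> S then g s else 0) ` PiE S (\<lambda>_. {..K})" by blast
  qed
  show "finite ((\<lambda>g s. if s \<in> S then g s else 0) ` PiE S (\<lambda>_. {..K}))"
    using assms by (intro finite_imageI finite_PiE) auto
qed

lemma sum_conv:
  fixes F :: "nat \<Rightarrow> nat \<Rightarrow> 'a::comm_ring_1"
  assumes S: "finite S" and F: "\<And>s j. s \<in> S \<Longrightarrow> j > d s \<Longrightarrow> F s j = 0"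
  shows "(\<Sum>g\<in>{g\<in>PiE S (\<lambda>s. {..d s}). sum g S = K}. \<Prod>s\<in>S. F s (g s))
       = (\<Sum>n\<in>{n. (\<forall>s. s \<notin> S \<longrightarrow> n s = 0) \<and> sum n S = K}. \<Prod>s\<in>S. F s (n s))"
proof -
  define B where "B = {n. (\<forall>s. s \<notin> S \<longrightarrow> n s = 0) \<and> sum n S = K \<and> (\<forall>s\<in>S. n s \<le> d s)}"
  have "(\<Sum>g\<in>{g\<in>PiE S (\<lambda>s. {..d s}). sum g S = K}. \<Prod>s\<in>S. F s (g s)) = (\<Sum>n\<in>B. \<Prod>s\<in>S. F s (n s))"
  proof (rule sum.reindex_bij_witness[of _ "\<lambda>n. restrict n S" "\<lambda>g s. if s \<in> S then g s else 0"])
    fix n assume "n \<in> B" then show "(\<lambda>s. if s \<in> S then restrict n S s else 0) = n"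
      by (auto simp: B_def)
  next
    fix n assume "n \<in> B" then show "restrict n S \<in> {g\<in>PiE S (\<lambda>s. {..d s}). sum g S = K}"
      by (auto simp: B_def)
  next
    fix g assume "g \<in> {g\<in>PiE S (\<lambda>s. {..d s}). sum g S = K}"
    then show "(\<Prod>s\<in>S. F s (if s \<in> S then g s else 0)) = (\<Prod>s\<in>S. F s (g s))"
      by simp
  next
    fix g assume g: "g \<in> {g\<in>PiE S (\<lambda>s. {..d s}). sum g S = K}"
    then show "restrict (\<lambda>s. if s \<in> S then g s else 0) S = g" by (auto simp: PiE_def extensional_def restrict_def)
    show "(\<lambda>s. if s \<in> S then g s else 0) \<in> B" using g by (auto simp: B_def)
  qed
  also have "\<dots> = (\<Sum>n\<in>{n. (\<forall>s. s \<notin> S \<longrightarrow> n s = 0) \<and> sum n S = K}. \<Prod>s\<in>S. F s (n s))"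
  proof (rule sum.mono_neutral_left)
    show "finite {n :: nat \<Rightarrow> nat. (\<forall>s. s \<notin> S \<longrightarrow> n s = 0) \<and> sum n S = K}" by (rule finite_fun_set[OF S])
    show "B \<subseteq> {n. (\<forall>s. s \<notin> S \<longrightarrow> n s = 0) \<and> sum n S = K}" by (auto simp: B_def)
    show "\<forall>i\<in>{n. (\<forall>s. s \<notin> S \<longrightarrow> n s = 0) \<and> sum n S = K} - B. (\<Prod>s\<in>S. F s (i s)) = 0"
    proof
      fix n assume "n \<in> {n. (\<forall>s. s \<notin> S \<longrightarrow> n s = 0) \<and> sum n S = K} - B"
      then obtain s where "s \<in> S" "n s > d s" by (auto simp: B_def not_le)
      then show "(\<Prod>s\<in>S. F s (n s)) = 0" using S F by (auto intro: prod_zero)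
    qed
  qed
  finally show ?thesis .
qed


lemma gchoose_term:
  fixes z :: nat
  shows "(of_int \<lfloor>(of_int (int z) :: rat) gchoose j\<rfloor> :: 'k::field) = of_nat (z choose j)"
proof -
  have "(of_int (int z) :: rat) gchoose j = of_nat (z choose j)"
    by (simp add: binomial_gbinomial)
  then show ?thesis by simp
qed

lemma r_coeff_eq:
  fixes x :: "nat \<Rightarrow> 'k::field"
  assumes S: "finite S" and k: "k \<in> S" "e k \<ge> 1" and M: "M \<ge> 1"
  shows "coeff (PP x S (\<lambda>s. if s = k then e s - 1 else e s)) (M - 1) =
    (let N = (\<Sum>s\<in>S. int (e s)) - int M in (-1) ^ nat N *
      (\<Sum>n\<in>{n :: nat \<Rightarrow> nat. (\<forall>s. s \<notin> S \<longrightarrow> n s = 0) \<and> int (sum n S) = N}.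
         \<Prod>s\<in>S. of_int \<lfloor>(of_int (int (e s) - (if s = k then 1 else 0)) :: rat) gchoose n s\<rfloor> * x s ^ n s))"
proof -
  define d where "d = (\<lambda>s. if s = k then e s - 1 else e s)"
  define N where "N = (\<Sum>s\<in>S. int (e s)) - int M"
  have dint: "int (e s) - (if s = k then 1 else 0) = int (d s)" for s
    using k by (auto simp: d_def)
  have sumd: "int (sum d S) = (\<Sum>s\<in>S. int (e s)) - 1"
  proof -
    have "int (sum d S) = (\<Sum>s\<in>S. int (e s) - (if s = k then 1 else 0))"
      by (simp add: dint)
    also have "\<dots> = (\<Sum>s\<in>S. int (e s)) - 1" using S k by (simp add: sum_subtractf)
    finally show ?thesis .
  qed
  have trm: "(\<Prod>s\<in>S. of_int \<lfloor>(of_int (int (e s) - (if s = k then 1 else 0)) :: rat) gchoose n s\<rfloor> * x s ^ n s)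
       = (\<Prod>s\<in>S. of_nat (d s choose n s) * x s ^ n s :: 'k)" for n
    by (simp only: dint gchoose_term)
  show ?thesis
  proof (cases "N < 0")
    case True
    then have emp: "{n :: nat \<Rightarrow> nat. (\<forall>s. s \<notin> S \<longrightarrow> n s = 0) \<and> int (sum n S) = N} = {}"
      by (auto simp del: of_nat_sum)
    moreover have "sum d S < M - 1" using True sumd M unfolding N_def by linarith
    then have "coeff (PP x S d) (M - 1) = 0"
      by (intro coeff_eq_0) (simp add: degree_PP[OF S])
    ultimately show ?thesis unfolding Let_def N_def[symmetric] d_def[symmetric] emp by simp
  next
    case False
    define K where "K = nat N"
    have Kd: "K = sum d S - (M - 1)" "M - 1 \<le> sum d S" using False sumd M unfolding K_def N_def by linarith+
    have set_eq: "{n :: nat \<Rightarrow> nat. (\<forall>s. s \<notin> S \<longrightarrow> n s = 0) \<and> int (sum n S) = N}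
        = {n. (\<forall>s. s \<notin> S \<longrightarrow> n s = 0) \<and> sum n S = K}" using False
      by (auto simp: K_def simp del: of_nat_sum)
    have "coeff (PP x S d) (M - 1) = (\<Sum>g\<in>{g\<in>PiE S (\<lambda>s. {..d s}). sum g S = K}.
            \<Prod>s\<in>S. of_nat (d s choose g s) * (- x s) ^ g s)"
      using coeff_PP[OF S Kd(2), of x] Kd(1) by simp
    also have "\<dots> = (\<Sum>n\<in>{n. (\<forall>s. s \<notin> S \<longrightarrow> n s = 0) \<and> sum n S = K}.
            \<Prod>s\<in>S. of_nat (d s choose n s) * (- x s) ^ n s)"
      by (rule sum_conv[OF S]) (simp add: binomial_eq_0)
    also have "\<dots> = (\<Sum>n\<in>{n. (\<forall>s. s \<notin> S \<longrightarrow> n s = 0) \<and> sum n S = K}.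
            (-1) ^ K * (\<Prod>s\<in>S. of_nat (d s choose n s) * x s ^ n s))"
    proof (intro sum.cong refl)
      fix n assume "n \<in> {n. (\<forall>s. s \<notin> S \<longrightarrow> n s = 0) \<and> sum n S = K}"
      then have nK: "sum n S = K" by simp
      have "(\<Prod>s\<in>S. of_nat (d s choose n s) * (- x s) ^ n s) =
            (\<Prod>s\<in>S. (-1) ^ n s * (of_nat (d s choose n s) * x s ^ n s) :: 'k)"
        by (intro prod.cong refl) (simp add: power_minus[of "x _"] mult_ac)
      also have "\<dots> = (-1) ^ sum n S * (\<Prod>s\<in>S. of_nat (d s choose n s) * x s ^ n s)"
        by (simp add: prod.distrib power_sum)
      finally show "(\<Prod>s\<in>S. of_nat (d s choose n s) * (- x s) ^ n s) =
            (-1) ^ K * (\<Prod>s\<in>S. of_nat (d s choose n s) * x s ^ n s)" using nK by simp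
    qed
    finally show ?thesis
      unfolding Let_def N_def[symmetric] d_def[symmetric] set_eq trm by (simp add: sum_distrib_left K_def)
  qed
qed


definition fr :: "'a::idom \<Rightarrow> 'a fract" where "fr p = Fract p 1"

lemma fr_mult: "fr (a * b) = fr a * fr b" by (simp add: fr_def)
lemma fr_add: "fr (a + b) = fr a + fr b" by (simp add: fr_def)
lemma fr_diff: "fr (a - b) = fr a - fr b" by (simp add: fr_def)
lemma fr_minus: "fr (- a) = - fr a" by (simp add: fr_def)
lemma fr_power: "fr (a ^ n) = fr a ^ n" by (simp add: fr_def power_fract)
lemma fr_0: "fr 0 = 0" by (simp add: fr_def fract_collapse)
lemma fr_1: "fr 1 = 1" by (simp add: fr_def fract_collapse)
lemma fr_sum: "fr (\<Sum>k\<in>S. f k) = (\<Sum>k\<in>S. fr (f k))"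
  by (induct S rule: infinite_finite_induct) (simp_all add: fr_0 fr_add)
lemma fr_eq_iff: "fr a = fr b \<longleftrightarrow> a = b" by (simp add: fr_def eq_fract)
lemma fr_eq_0_iff: "fr a = 0 \<longleftrightarrow> a = 0" using fr_eq_iff[of a 0] by (simp add: fr_0)
lemma Fract_fr: "Fract a b = fr a / fr b" by (simp add: fr_def)
lemma fr_of_nat: "fr (of_nat n) = of_nat n" by (simp add: fr_def of_nat_fract)

lemmas fr_simps = fr_mult fr_add fr_diff fr_minus fr_power fr_0 fr_1 fr_sum fr_of_nat

lemma hpoly_PP: "hpoly r a x = PP x {1..r} a"
  by (simp add: hpoly_def PP_def lin_def)

definition Dn :: "nat \<Rightarrow> nat \<Rightarrow> (nat \<Rightarrow> nat) \<Rightarrow> (nat \<Rightarrow> 'k::field) \<Rightarrow> nat \<Rightarrow> 'k poly" where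
  "Dn m r a x n = PP x {1..r} (\<lambda>k. n * a k div m)"
definition En :: "nat \<Rightarrow> nat \<Rightarrow> (nat \<Rightarrow> nat) \<Rightarrow> (nat \<Rightarrow> 'k::field) \<Rightarrow> nat \<Rightarrow> 'k poly" where
  "En m r a x n = PP x {1..r} (\<lambda>k. n * a k mod m)"

lemma h_pow: "hpoly r a x ^ n = Dn m r a x n ^ m * En m r a x n"
  unfolding hpoly_PP Dn_def En_def PP_power PP_mult
  by (rule PP_cong) (simp add: mult.commute)

lemma vcoef_Dn: "vcoef m r a x n = Fract 1 (Dn m r a x n)"
  by (simp add: vcoef_def Dn_def PP_def lin_def)

lemma Dn_nz: "Dn m r a x n \<noteq> 0" by (simp add: Dn_def PP_nonzero)
lemma En_nz: "En m r a x n \<noteq> 0" by (simp add: En_def PP_nonzero)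

lemma En_order:
  assumes "inj_on x {1..r}" "m > 0"
  shows "order c (En m r a x n) < m"
  unfolding En_def using assms by (intro order_PP_less) auto

lemma mpow_fr: "mpow m r a x n R = (R * fr (Dn m r a x n)) ^ m * fr (En m r a x n)"
proof -
  have "mpow m r a x n R = R ^ m * fr (Dn m r a x n ^ m * En m r a x n)"
    unfolding mpow_def h_pow[of r a x n m] fr_def ..
  then show ?thesis by (simp only: fr_mult fr_power power_mult_distrib mult.assoc)
qed

lemma inU_char:
  fixes x :: "nat \<Rightarrow> 'k::alg_closed_field"
  assumes inj: "inj_on x {1..r}" and m: "m > 0" and U: "inU m r a x n R"
  shows "\<exists>u. R = Fract u (Dn m r a x n)"
proof -
  obtain q where q: "mpow m r a x n R = Fract q 1" using U by (auto simp: inU_def)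
  define T where "T = R * fr (Dn m r a x n)"
  have "T ^ m * Fract (En m r a x n) 1 = Fract q ([:0,1:] ^ 0)"
    using q by (simp add: mpow_fr T_def fr_def)
  from char_lemma[OF m En_nz _ this] En_order[OF inj m]
  obtain u k where uk: "T = Fract u ([:0,1:] ^ k)" "u ^ m * En m r a x n * [:0,1:] ^ 0 = q * [:0,1:] ^ (m * k)"
    "k > 0 \<longrightarrow> poly u 0 \<noteq> 0" by blast
  have "k = 0"
  proof (rule ccontr)
    assume k: "k \<noteq> 0"
    then have pu: "poly u 0 \<noteq> 0" using uk(3) by simp
    then have u0: "u \<noteq> 0" by auto
    have q0: "q \<noteq> 0" using uk(2) u0 En_nz[of m r a x n] by auto
    have "order 0 (u ^ m * En m r a x n) = order 0 (En m r a x n)"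
      using u0 En_nz[of m r a x n] pu by (simp add: order_mult order_power order_0I)
    also have "\<dots> < m" by (rule En_order[OF inj m])
    finally have "order 0 (q * [:0,1:] ^ (m * k)) < m" using uk(2) by simp
    moreover have "order 0 (q * [:0,1:] ^ (m * k)) = order 0 q + m * k"
      using q0 by (simp add: order_mult order_power order_power_n_n[of 0 1, simplified])
    moreover have "m * k \<ge> m" using k by simp
    ultimately show False by linarith
  qed
  then have "T = fr u" using uk(1) by (simp add: fr_def)
  then have "R = fr u / fr (Dn m r a x n)"
    unfolding T_def using Dn_nz[of m r a x n] by (simp add: fr_eq_0_iff field_simps)
  then show ?thesis by (auto simp: Fract_fr)
qed

lemma inV_char:
  fixes x :: "nat \<Rightarrow> 'k::alg_closed_field"
  assumes inj: "inj_on x {1..r}" and m: "m > 0" and V: "inV m r a x n R"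
    and dE: "degree (En m r a x n) > 0"
  shows "R = 0 \<or> (\<exists>t l. R = Fract t (Dn m r a x n * [:0,1:] ^ l) \<and> degree t < l)"
proof -
  obtain q e where q: "degree q \<le> e" "mpow m r a x n R = Fract q ([:0,1:] ^ e)" using V by (auto simp: inV_def)
  define T where "T = R * fr (Dn m r a x n)"
  have "T ^ m * Fract (En m r a x n) 1 = Fract q ([:0,1:] ^ e)"
    using q by (simp add: mpow_fr T_def fr_def)
  from char_lemma[OF m En_nz _ this] En_order[OF inj m]
  obtain u k where uk: "T = Fract u ([:0,1:] ^ k)" "u ^ m * En m r a x n * [:0,1:] ^ e = q * [:0,1:] ^ (m * k)"
    by blast
  show ?thesis
  proof (cases "u = 0")
    case True
    then have "T = 0" using uk(1) by (simp add: fract_collapse)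
    then show ?thesis unfolding T_def using Dn_nz[of m r a x n] by (simp add: fr_eq_0_iff)
  next
    case False
    have q0: "q \<noteq> 0" using uk(2) False En_nz[of m r a x n] by auto
    have "degree (u ^ m * En m r a x n * [:0,1:] ^ e) = m * degree u + degree (En m r a x n) + e"
      using False En_nz[of m r a x n] by (simp add: degree_mult_eq degree_power_eq degree_linear_power[of 0, simplified])
    moreover have "degree (q * [:0,1:] ^ (m * k)) = degree q + m * k"
      using q0 by (simp add: degree_mult_eq degree_linear_power[of 0, simplified])
    ultimately have "m * degree u + degree (En m r a x n) + e = degree q + m * k" using uk(2) by simp
    then have "m * degree u < m * k" using q(1) dE by linarith
    then have dl: "degree u < k" by simp
    have "R = fr u / (fr ([:0,1:] ^ k) * fr (Dn m r a x n))"
      using uk(1) unfolding T_def Fract_fr using Dn_nz[of m r a x n]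
      by (simp add: fr_eq_0_iff field_simps)
    then have "R = Fract u (Dn m r a x n * [:0,1:] ^ k)" by (simp add: Fract_fr fr_mult mult.commute)
    then show ?thesis using dl by blast
  qed
qed


lemma monom_X: "monom c k = [:c:] * [:0,1:] ^ k"
  by (simp add: monom_altdef)

lemma cutoff_split:
  fixes G :: "'k::field poly" and N f :: nat
  defines "cc \<equiv> \<lambda>l. if l \<le> N then coeff G (N - l) else 0"
  shows "poly_cutoff N G = poly_cutoff (N - f) G + (\<Sum>l\<in>{1..f}. monom (cc l) (N - l))"
proof (rule poly_eqI)
  fix i
  have "(\<Sum>l\<in>{1..f}. coeff (monom (cc l) (N - l)) i)
      = (\<Sum>l\<in>{1..f}. if l = N - i then (if i < N then coeff G i else 0) else 0)"
  proof (intro sum.cong refl)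
    fix l assume l: "l \<in> {1..f}"
    show "coeff (monom (cc l) (N - l)) i = (if l = N - i then (if i < N then coeff G i else 0) else 0)"
      using l by (auto simp: coeff_monom cc_def)
  qed
  also have "\<dots> = (if N - i \<in> {1..f} then (if i < N then coeff G i else 0) else 0)"
    by (rule sum.delta) simp
  finally have s: "coeff (\<Sum>l\<in>{1..f}. monom (cc l) (N - l)) i = (if N - i \<in> {1..f} then (if i < N then coeff G i else 0) else 0)"
    by (simp only: coeff_sum)
  show "coeff (poly_cutoff N G) i = coeff (poly_cutoff (N - f) G + (\<Sum>l\<in>{1..f}. monom (cc l) (N - l))) i"
    unfolding coeff_add s coeff_poly_cutoff
    by (cases "i < N - f"; cases "i < N") auto
qed

lemma Sterm_mult:
  fixes D :: "'k::field poly"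
  assumes "D \<noteq> 0" "j \<le> L"
  shows "Fract [:c:] 1 * Fract 1 D / Xf ^ j * (fr D * fr ([:0,1:] ^ L)) = fr (monom c (L - j))"
proof -
  have X: "fr [:0,1:] \<noteq> (0 :: 'k poly fract)" by (simp add: fr_eq_0_iff)
  have L: "[:0,1:] ^ L = [:0,1::'k:] ^ (L - j) * [:0,1:] ^ j" using assms(2)
    by (simp flip: power_add)
  show ?thesis
    unfolding monom_X Xf_def L fr_mult fr_power Fract_fr[of 1 D] fr_def[symmetric]
    using assms(1) X by (simp add: fr_eq_0_iff fr_1 field_simps)
qed

lemma S_mult:
  fixes D :: "'k::field poly"
  assumes "D \<noteq> 0" "f \<le> L"
  shows "(\<Sum>j\<in>{1..f}. Fract [:c j:] 1 * Fract 1 D / Xf ^ j) * (fr D * fr ([:0,1:] ^ L))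
        = fr (\<Sum>j\<in>{1..f}. monom (c j) (L - j))"
  unfolding sum_distrib_right fr_sum using assms by (intro sum.cong refl Sterm_mult) auto

lemma coeff_S_high:
  assumes "f \<le> L"
  shows "coeff (\<Sum>j\<in>{1..f}. monom (c j) (L - j)) (L + d) = 0"
  using assms by (auto simp: coeff_sum coeff_monom intro!: sum.neutral)


lemma degree_X_pow: "degree ([:0,1::'k::field:] ^ k) = k"
  using degree_linear_power[of "0::'k" k] by simp

lemma proj1_val:
  fixes x :: "nat \<Rightarrow> 'k::alg_closed_field" and G :: "'k poly"
  assumes inj: "inj_on x {1..r}" and m: "m > 0"
    and fdef: "f = nat (ftau m r a (- int n))"
    and dE: "degree (En m r a x n) = m * (f + 1)"
    and R: "R = Fract G (Dn m r a x n * [:0,1:] ^ N)"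
  shows "proj1 m r a x n R = Fract (poly_shift N G) (Dn m r a x n)"
proof -
  define D where "D = Dn m r a x n"
  define E where "E = En m r a x n"
  define X where "X = ([:0,1:] :: 'k poly)"
  define P0 where "P0 = poly_shift N G"
  define t0 where "t0 = poly_cutoff (N - f) G"
  define cc where "cc = (\<lambda>l. if l \<le> N then coeff G (N - l) else 0)"
  define Sc where "Sc c = (\<Sum>j\<in>{1..f}. Fract [:c j:] 1 * vcoef m r a x n / Xf ^ j)" for c :: "nat \<Rightarrow> 'k"
  have D0: "D \<noteq> 0" unfolding D_def by (rule Dn_nz)
  have E0: "E \<noteq> 0" unfolding E_def by (rule En_nz)
  have X0: "fr X \<noteq> 0" by (simp add: X_def fr_eq_0_iff)
  have frD0: "fr D \<noteq> 0" using D0 by (simp add: fr_eq_0_iff)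
  have vc: "vcoef m r a x n = Fract 1 D" by (simp add: vcoef_Dn D_def)
  have Sc_mult: "Sc c * (fr D * fr (X ^ L)) = fr (\<Sum>j\<in>{1..f}. monom (c j) (L - j))" if "f \<le> L" for c L
    unfolding Sc_def vc X_def using S_mult[OF D0 that] by simp
  have Gsplit: "G = X ^ N * P0 + t0 + (\<Sum>l\<in>{1..f}. monom (cc l) (N - l))"
    using split_shift[of G N] cutoff_split[of N G f]
    by (simp add: X_def P0_def t0_def cc_def monom_X[of 1] add.assoc)
  have decomp: "R = Fract P0 D + Sc cc + Fract t0 (D * X ^ N)"
  proof -
    have Z: "fr D * fr (X ^ (N + f)) \<noteq> 0" using frD0 X0 by (simp add: fr_power)
    have "R * (fr D * fr (X ^ (N + f))) = fr (G * X ^ f)"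
      unfolding R Fract_fr D_def[symmetric] X_def[symmetric] using frD0 X0
      by (simp add: fr_simps power_add field_simps)
    also have "\<dots> = fr (P0 * X ^ (N + f)) + fr (t0 * X ^ f) + fr ((\<Sum>l\<in>{1..f}. monom (cc l) (N - l)) * X ^ f)"
      by (subst Gsplit) (simp add: fr_simps algebra_simps power_add)
    also have "fr (P0 * X ^ (N + f)) = Fract P0 D * (fr D * fr (X ^ (N + f)))"
      using frD0 X0 by (simp add: Fract_fr fr_simps)
    also have "fr (t0 * X ^ f) = Fract t0 (D * X ^ N) * (fr D * fr (X ^ (N + f)))"
      using frD0 X0 by (simp add: Fract_fr fr_simps power_add)
    also have "fr ((\<Sum>l\<in>{1..f}. monom (cc l) (N - l)) * X ^ f) = fr (\<Sum>l\<in>{1..f}. monom (cc l) (N + f - l))"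
    proof -
      have "monom (cc l) (N - l) * X ^ f = monom (cc l) (N + f - l)" if "l \<in> {1..f}" for l
        using that by (cases "l \<le> N") (auto simp: cc_def X_def monom_X power_add[symmetric])
      then show ?thesis by (simp add: sum_distrib_right)
    qed
    also have "\<dots> = Sc cc * (fr D * fr (X ^ (N + f)))" by (rule Sc_mult[symmetric]) simp
    finally have "R * (fr D * fr (X ^ (N + f))) = (Fract P0 D + Sc cc + Fract t0 (D * X ^ N)) * (fr D * fr (X ^ (N + f)))"
      by (simp add: algebra_simps)
    then show ?thesis using Z by simp
  qed
  have inU0: "inU m r a x n (Fract P0 D)"
  proof -
    have "Fract P0 D * fr D = fr P0" using frD0 by (simp add: Fract_fr)
    then have "mpow m r a x n (Fract P0 D) = fr (P0 ^ m * E)"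
      by (simp add: mpow_fr D_def[symmetric] E_def[symmetric] fr_simps)
    then show ?thesis unfolding inU_def fr_def by blast
  qed
  have inV0: "inV m r a x n (Fract t0 (D * X ^ N))"
  proof -
    have "Fract t0 (D * X ^ N) * fr D = fr t0 / fr (X ^ N)" using frD0 X0 by (simp add: Fract_fr fr_simps)
    then have "mpow m r a x n (Fract t0 (D * X ^ N)) = Fract (t0 ^ m * E) (X ^ (N * m))"
      by (simp add: mpow_fr D_def[symmetric] E_def[symmetric] fr_simps Fract_fr power_divide
          power_mult field_simps)
    moreover have "degree (t0 ^ m * E) \<le> N * m"
    proof (cases "t0 = 0")
      case True then show ?thesis using m by (simp add: zero_power)
    next
      case False
      then have Nf: "f < N" unfolding t0_def by (auto simp: poly_eq_iff coeff_poly_cutoff split: if_splits)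
      have "degree t0 \<le> N - f - 1"
        by (rule degree_le) (auto simp: t0_def coeff_poly_cutoff)
      then have "degree (t0 ^ m * E) \<le> m * (N - f - 1) + m * (f + 1)"
        using False E0 by (simp add: degree_mult_eq degree_power_eq E_def dE)
      also have "\<dots> = m * ((N - f - 1) + (f + 1))" by (simp add: add_mult_distrib2)
      also have "(N - f - 1) + (f + 1) = N" using Nf by simp
      finally show ?thesis by (simp only: mult.commute)
    qed
    ultimately show ?thesis unfolding inV_def X_def by blast
  qed
  have Sc_def': "(\<Sum>j\<in>{1..nat (ftau m r a (- int n))}. Fract [:c j:] 1 * vcoef m r a x n / Xf ^ j) = Sc c" for c
    by (simp add: Sc_def fdef)
  show ?thesis
    unfolding proj1_def Sc_def' P0_def[symmetric] D_def[symmetric]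
  proof (rule the_equality)
    show "inU m r a x n (Fract P0 D) \<and> (\<exists>c W. inV m r a x n W \<and> R = Fract P0 D + Sc c + W)"
      using inU0 inV0 decomp by blast
  next
    fix U assume U: "inU m r a x n U \<and> (\<exists>c W. inV m r a x n W \<and> R = U + Sc c + W)"
    then obtain c W where W: "inV m r a x n W" and RU: "R = U + Sc c + W" by blast
    obtain u where u: "U = Fract u D" using inU_char[OF inj m, of a n U] U by (auto simp: D_def)
    have dEp: "degree (En m r a x n) > 0" using dE m by simp
    obtain w l where wl: "W * (fr D * fr (X ^ (l + N + f))) = fr w" "\<forall>i\<ge>l + N + f. coeff w i = 0"
    proof (cases "W = 0")
      case True then show ?thesis using that[of 0 0] by (simp add: fr_0)
    next
      case False
      then obtain t l where tl: "W = Fract t (D * X ^ l)" "degree t < l"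
        using inV_char[OF inj m W dEp] by (auto simp: D_def X_def)
      have "W * (fr D * fr (X ^ (l + N + f))) = fr (t * X ^ (N + f))"
        unfolding tl(1) using frD0 X0 by (simp add: Fract_fr fr_simps power_add field_simps)
      moreover have "coeff (t * X ^ (N + f)) i = 0" if "i \<ge> l + N + f" for i
      proof (cases "t = 0")
        case False
        have "degree (t * X ^ (N + f)) = degree t + (N + f)"
          using False by (simp add: degree_mult_eq X_def degree_X_pow)
        then show ?thesis using tl(2) that by (intro coeff_eq_0) simp
      qed simp
      ultimately show ?thesis using that by blast
    qed
    define L where "L = l + N + f"
    have W0m: "Fract t0 (D * X ^ N) * (fr D * fr (X ^ L)) = fr (t0 * X ^ (l + f))"
      unfolding L_def using frD0 X0 by (simp add: Fract_fr fr_simps power_add field_simps)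
    have "(U + Sc c + W) * (fr D * fr (X ^ L)) = (Fract P0 D + Sc cc + Fract t0 (D * X ^ N)) * (fr D * fr (X ^ L))"
      using RU decomp by simp
    then have "fr (u * X ^ L + (\<Sum>j\<in>{1..f}. monom (c j) (L - j)) + w)
             = fr (P0 * X ^ L + (\<Sum>j\<in>{1..f}. monom (cc j) (L - j)) + t0 * X ^ (l + f))"
      unfolding distrib_right Sc_mult[of L, OF _] W0m wl(1)[folded L_def]
      using Sc_mult[of L c] Sc_mult[of L cc] frD0 X0 u
      by (simp add: L_def Fract_fr fr_simps field_simps)
    then have eq: "u * X ^ L + (\<Sum>j\<in>{1..f}. monom (c j) (L - j)) + w
             = P0 * X ^ L + (\<Sum>j\<in>{1..f}. monom (cc j) (L - j)) + t0 * X ^ (l + f)"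
      by (simp add: fr_eq_iff)
    have "coeff u d = coeff P0 d" for d
    proof -
      have c1: "coeff (X ^ L * p) (L + d) = coeff p d" for p :: "'k poly"
      proof -
        have "X ^ L = monom 1 L" by (simp add: X_def monom_altdef)
        then show ?thesis by (simp add: coeff_monom_mult)
      qed
      have c2: "coeff (t0 * X ^ (l + f)) (L + d) = 0"
      proof (cases "t0 = 0")
        case False
        have "degree t0 < N"
        proof (rule ccontr)
          assume "\<not> degree t0 < N"
          then have "coeff t0 (degree t0) = 0" by (simp add: t0_def coeff_poly_cutoff)
          then show False using False by simp
        qed
        then have "degree (t0 * X ^ (l + f)) < L + d"
          using False by (simp add: degree_mult_eq X_def degree_X_pow L_def)
        then show ?thesis by (intro coeff_eq_0) simp
      qed simp
      have "coeff (u * X ^ L + (\<Sum>j\<in>{1..f}. monom (c j) (L - j)) + w) (L + d)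
          = coeff (P0 * X ^ L + (\<Sum>j\<in>{1..f}. monom (cc j) (L - j)) + t0 * X ^ (l + f)) (L + d)"
        using eq by simp
      then show ?thesis
        using c1[of u] c1[of P0] c2 wl(2) coeff_S_high[of f L c d] coeff_S_high[of f L cc d]
        by (simp add: L_def mult.commute)
    qed
    then have "u = P0" by (simp add: poly_eq_iff)
    then show "U = Fract P0 D" using u by simp
  qed
qed


lemma field_id:
  fixes D D2 H h dD dh dP P LD Lh Le n \<mu> :: "'a::field"
  assumes nz: "D \<noteq> 0" "D2 \<noteq> 0" "H \<noteq> 0" "\<mu> \<noteq> 0"
    and h: "h = D * D2 * H" and dD: "dD * H = D * LD" and dh: "dh * H = h * Lh"
    and L: "n * Lh = \<mu> * (LD - Le)"
  shows "((dP * D - P * dD) / (D * D) + P / D * ((n * dh) / (\<mu> * h))) * (1 / D2) * h = H * dP - P * Le"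
proof -
  have dD': "dD = D * LD / H" using dD nz by (simp add: field_simps)
  have dh': "dh = h * Lh / H" using dh nz by (simp add: field_simps)
  have L': "n * Lh / \<mu> = LD - Le" using L nz by (simp add: field_simps)
  have h0: "h \<noteq> 0" using h nz by simp
  have "((dP * D - P * dD) / (D * D) + P / D * ((n * dh) / (\<mu> * h))) * (1 / D2) * h
      = H * dP - P * LD + P * (n * Lh / \<mu>)"
    unfolding dD' dh' h using nz by (simp add: field_simps)
  also have "\<dots> = H * dP - P * Le" unfolding L' by (simp add: algebra_simps)
  finally show ?thesis .
qed


lemma fract_deriv_Fract:
  fixes u v :: "'k::field poly"
  assumes v: "v \<noteq> 0"
  shows "fract_deriv (Fract u v) = Fract (pderiv u * v - u * pderiv v) (v * v)"
proof -
  define uv where "uv = (SOME (u', v'). v' \<noteq> 0 \<and> Fract u v = Fract u' v')"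
  have "\<exists>p. (\<lambda>(u', v'). v' \<noteq> 0 \<and> Fract u v = Fract u' v') p"
    using v by (intro exI[of _ "(u, v)"]) simp
  then have "(\<lambda>(u', v'). v' \<noteq> 0 \<and> Fract u v = Fract u' v') uv"
    unfolding uv_def by (rule someI_ex)
  then obtain u2 v2 where uv2: "uv = (u2, v2)" "v2 \<noteq> 0" "Fract u v = Fract u2 v2"
    by (cases uv) auto
  have h1: "u * v2 = u2 * v" using uv2 v by (simp add: eq_fract)
  have h2: "pderiv u * v2 + u * pderiv v2 = pderiv u2 * v + u2 * pderiv v"
    using arg_cong[OF h1, of pderiv] by (simp add: pderiv_mult algebra_simps)
  have "(pderiv u2 * v2 - u2 * pderiv v2) * (v * v) = (pderiv u * v - u * pderiv v) * (v2 * v2)"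
  proof -
    have "(pderiv u2 * v2 - u2 * pderiv v2) * (v * v) = v2 * v * (pderiv u2 * v) - v * v * (u2 * pderiv v2)"
      by (simp add: algebra_simps)
    also have "\<dots> = v2 * v * (pderiv u * v2 + u * pderiv v2 - u2 * pderiv v) - v * pderiv v2 * (u2 * v)"
      using h2 by (simp add: algebra_simps)
    also have "\<dots> = v2 * v * (pderiv u * v2 + u * pderiv v2) - v2 * pderiv v * (u2 * v) - v * pderiv v2 * (u2 * v)"
      by (simp add: algebra_simps)
    also have "\<dots> = v2 * v * (pderiv u * v2 + u * pderiv v2) - v2 * pderiv v * (u * v2) - v * pderiv v2 * (u * v2)"
      by (simp add: h1)
    also have "\<dots> = (pderiv u * v - u * pderiv v) * (v2 * v2)"
      by (simp add: algebra_simps)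
    finally show ?thesis .
  qed
  then show ?thesis
    unfolding fract_deriv_def uv_def[symmetric] uv2(1) using v uv2(2) by (simp add: eq_fract)
qed

lemma logder_PP:
  assumes S: "finite S"
  shows "pderiv (PP x S d) * (\<Prod>s\<in>S. lin x s)
       = PP x S d * (\<Sum>k\<in>S. smult (of_nat (d k)) (\<Prod>s\<in>S - {k}. lin x s))"
proof -
  have "pderiv (PP x S d) * (\<Prod>s\<in>S. lin x s)
     = (\<Sum>k\<in>S. smult (of_nat (d k)) (PP x S (\<lambda>s. if s = k then d s - 1 else d s) * (\<Prod>s\<in>S. lin x s)))"
    by (simp add: pderiv_PP[OF S] sum_distrib_right)
  also have "\<dots> = (\<Sum>k\<in>S. smult (of_nat (d k)) (PP x S d * (\<Prod>s\<in>S - {k}. lin x s)))"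
  proof (intro sum.cong refl)
    fix k assume k: "k \<in> S"
    show "smult (of_nat (d k)) (PP x S (\<lambda>s. if s = k then d s - 1 else d s) * (\<Prod>s\<in>S. lin x s)) =
          smult (of_nat (d k)) (PP x S d * (\<Prod>s\<in>S - {k}. lin x s))"
    proof (cases "d k = 0")
      case False
      have a: "PP x S (\<lambda>s. if s = k then d s - 1 else d s) = lin x k ^ (d k - 1) * PP x (S - {k}) d"
        using PP_remove[OF S k, of x "\<lambda>s. if s = k then d s - 1 else d s"] by (simp add: PP_def)
      have b: "PP x S d = lin x k ^ d k * PP x (S - {k}) d" by (rule PP_remove[OF S k])
      have c: "(\<Prod>s\<in>S. lin x s) = lin x k * (\<Prod>s\<in>S - {k}. lin x s)" using S k by (simp add: prod.remove)
      have e: "lin x k ^ d k = lin x k * lin x k ^ (d k - 1)" using False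
        by (metis Suc_diff_1 not_gr0 power_Suc)
      show ?thesis unfolding a b c e by (simp add: mult_ac)
    qed simp
  qed
  also have "\<dots> = PP x S d * (\<Sum>k\<in>S. smult (of_nat (d k)) (\<Prod>s\<in>S - {k}. lin x s))"
    by (simp add: sum_distrib_left mult_smult_right)
  finally show ?thesis .
qed


lemma smult_of_nat_poly: "smult (of_nat n) p = (of_nat n :: 'k::field poly) * p"
  by (simp add: of_nat_poly)

lemma Pf_val:
  fixes P0 D D2 H h LD Lh Le :: "'k::field poly" and n1 m :: nat
  assumes nz: "D \<noteq> 0" "D2 \<noteq> 0" "H \<noteq> 0" "(of_nat m :: 'k) \<noteq> 0"
    and h: "h = D * D2 * H" and dD: "pderiv D * H = D * LD" and dh: "pderiv h * H = h * Lh"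
    and L: "smult (of_nat n1) Lh = smult (of_nat m) (LD - Le)"
  shows "(fract_deriv (Fract P0 D) + Fract P0 D * Fract (smult (of_nat n1) (pderiv h)) (smult (of_nat m) h))
           * Fract 1 D2 * Fract h 1 = fr (H * pderiv P0 - P0 * Le)"
proof -
  have mu: "(of_nat m :: 'k poly fract) \<noteq> 0"
  proof
    assume "(of_nat m :: 'k poly fract) = 0"
    then have "fr (of_nat m :: 'k poly) = fr 0" by (simp add: fr_of_nat fr_0)
    then have "(of_nat m :: 'k poly) = 0" by (simp add: fr_eq_iff)
    then show False using nz(4) by (simp add: of_nat_poly)
  qed
  have fd: "fract_deriv (Fract P0 D) = (fr (pderiv P0) * fr D - fr P0 * fr (pderiv D)) / (fr D * fr D)"
    by (subst fract_deriv_Fract[OF nz(1)]) (simp add: Fract_fr fr_simps)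
  have fh: "Fract (smult (of_nat n1) (pderiv h)) (smult (of_nat m) h) = (of_nat n1 * fr (pderiv h)) / (of_nat m * fr h)"
    by (simp add: smult_of_nat_poly Fract_fr fr_simps)
  have L': "of_nat n1 * fr Lh = of_nat m * (fr LD - fr Le)"
    using arg_cong[OF L, of fr] by (simp add: smult_of_nat_poly fr_simps)
  have "(fract_deriv (Fract P0 D) + Fract P0 D * Fract (smult (of_nat n1) (pderiv h)) (smult (of_nat m) h))
           * Fract 1 D2 * Fract h 1 =
        ((fr (pderiv P0) * fr D - fr P0 * fr (pderiv D)) / (fr D * fr D) + fr P0 / fr D * ((of_nat n1 * fr (pderiv h)) / (of_nat m * fr h))) * (1 / fr D2) * fr h"
    unfolding fd fh by (simp add: Fract_fr fr_1 fr_def[symmetric])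
  also have "\<dots> = fr H * fr (pderiv P0) - fr P0 * fr Le"
  proof (rule field_id)
    show "fr h = fr D * fr D2 * fr H" by (simp add: h fr_mult)
    show "fr (pderiv D) * fr H = fr D * fr LD" by (simp add: dD flip: fr_mult)
    show "fr (pderiv h) * fr H = fr h * fr Lh" by (simp only: dh flip: fr_mult)
  qed (use nz mu L' in \<open>simp_all add: fr_eq_0_iff\<close>)
  finally show ?thesis by (simp add: fr_simps)
qed


lemma exp_id:
  fixes m p i a :: nat
  assumes "m > 0"
  shows "(p*i div m) * a + ((p*i mod m) * a) div m = (p*(i*a mod m)) div m + p*(i*a div m)"
proof -
  define q where "q = p*i div m"
  define s where "s = p*i mod m"
  have e: "p*i = m*q + s" by (simp add: q_def s_def)
  have "p*i*a = m*(q*a) + s*a" unfolding e by (simp add: algebra_simps)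
  then have 1: "p*i*a div m = q*a + (s*a) div m"
    using assms by simp
  define q2 where "q2 = i*a div m"
  define s2 where "s2 = i*a mod m"
  have e2: "i*a = m*q2 + s2" by (simp add: q2_def s2_def)
  have "p*i*a = m*(p*q2) + p*s2" unfolding mult.assoc e2 by (simp add: algebra_simps)
  then have 2: "p*i*a div m = p*q2 + (p*s2) div m"
    using assms by simp
  show ?thesis using 1 2 unfolding q_def s_def q2_def s2_def by simp
qed

lemma ce_id:
  fixes m p i a :: nat
  assumes "m > 0"
  shows "((p*i mod m)*a mod m) + m * (p*(i*a mod m) div m) = p*(i*a mod m)"
proof -
  have "(p*i mod m)*a mod m = (p*i)*a mod m" by (simp add: mod_mult_left_eq)
  also have "\<dots> = p*(i*a) mod m" by (simp add: mult.assoc)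
  also have "\<dots> = p*(i*a mod m) mod m" by (simp add: mod_mult_right_eq)
  finally have "(p*i mod m)*a mod m = p*(i*a mod m) mod m" .
  moreover have "p*(i*a mod m) mod m + m * (p*(i*a mod m) div m) = p*(i*a mod m)"
    by (simp add: mod_mult_div_eq)
  ultimately show ?thesis by simp
qed
lemma n2div:
  fixes m n a :: nat
  assumes "n < m" "a > 0" "n * a mod m \<noteq> 0"
  shows "n * a div m + (m - n) * a div m + 1 = a"
proof -
  define b where "b = n * a div m"
  define c where "c = n * a mod m"
  have m: "m > 0" using assms by simp
  have nab: "n * a = m * b + c" by (simp add: b_def c_def)
  have c: "0 < c" "c < m" using assms m by (auto simp: c_def)
  have "n * a < m * a" using assms by simp
  then have ba: "b < a" using nab by (metis add_lessD1 nat_mult_less_cancel_disj)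
  obtain q where q: "a = Suc (b + q)" using less_imp_Suc_add[OF ba] by blast
  have "(m - n) * a = m * a - n * a" by (simp add: diff_mult_distrib)
  also have "\<dots> = m * q + (m - c)"
  proof -
    have ma: "m * a = m * q + m * b + m" using q by (simp add: algebra_simps)
    show ?thesis using ma nab c by linarith
  qed
  finally have "(m - n) * a div m = (m * q + (m - c)) div m" by simp
  also have "\<dots> = q + (m - c) div m" using m by simp
  also have "(m - c) div m = 0" using c by simp
  finally have "(m - n) * a div m = q" by simp
  then show ?thesis unfolding b_def[symmetric] using q by simp
qed


lemma powdiv: "((1 / (A::'a::field)) / B ^ j) ^ p * C = C / (A ^ p * B ^ (p*j))"
  by (simp add: power_divide power_mult_distrib power_mult mult.commute[of p j])

lemma smult_sumr: "smult c (\<Sum>k\<in>S. f k) = (\<Sum>k\<in>S. smult c (f k))"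
  by (induct S rule: infinite_finite_induct) (simp_all add: smult_add_right)

theorem proposition5p3:
  fixes m r p i j j' :: nat and a :: "nat \<Rightarrow> nat" and x :: "nat \<Rightarrow> 'k::alg_closed_field"
  assumes "m \<ge> 2" and "r \<ge> 3"
    and "\<forall>k\<in>{1..r}. 1 \<le> a k \<and> a k \<le> m - 1"
    and "(\<Sum>k\<in>{1..r}. a k) mod m = 0"
    and "Gcd (insert m (a ` {1..r})) = 1"
    and "prime p" and "\<not> p dvd m"
    and "CHAR('k) = p"
    and "\<forall>c::'k. \<exists>n>0. c ^ (p ^ n) = c"
    and "inj_on x {1..r}"
    and "1 \<le> i" and "i \<le> m - 1" and "coprime i m"
    and "1 \<le> j" and "int j \<le> ftau m r a (- int i)"
    and "1 \<le> j'" and "int j' \<le> ftau m r a (int (p * i))"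
  shows "psi_coeff m r a x p i j j' =
           - (\<Sum>k\<in>{1..r}. of_nat (e_ik m a p i k) * r_coeff m r a x p i j k * q_coeff r x j' k)"
proof -
  note m2 = assms(1) and r3 = assms(2) and arange = assms(3) and asum = assms(4)
  note pprime = assms(6) and pm = assms(7) and char = assms(8) and inj = assms(10)
  note cop_i = assms(13) and j1 = assms(14)
  define S where "S = {1..r}"
  have fin: "finite S" by (simp add: S_def)
  have m0: "m > 0" using m2 by simp
  have p2: "p \<ge> 2" using pprime by (simp add: prime_ge_2_nat)
  define n1 where "n1 = p * i mod m"
  have cop_pm: "coprime p m" using pprime pm by (rule prime_imp_coprime)
  have cop_n1: "coprime n1 m" unfolding n1_def using cop_pm cop_i m0 by simp
  have n1pos: "n1 > 0"
  proof (rule ccontr)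
    assume "\<not> n1 > 0" then have "n1 = 0" by simp
    then show False using cop_n1 m2 by simp
  qed
  have n1m: "n1 < m" unfolding n1_def using m0 by simp
  have ck: "n1 * a k mod m \<noteq> 0" if "k \<in> S" for k
  proof
    assume "n1 * a k mod m = 0"
    then have "m dvd n1 * a k" by (simp add: mod_eq_0_iff_dvd)
    then have "m dvd a k" using cop_n1 by (simp add: coprime_dvd_mult_right_iff coprime_commute)
    moreover have "1 \<le> a k \<and> a k \<le> m - 1" using arange that unfolding S_def by blast
    then have "0 < a k" "a k < m" using m2 by auto
    ultimately show False by (simp add: nat_dvd_not_less)
  qed
  have apos: "a k > 0" if "k \<in> S" for k
  proof -
    have "1 \<le> a k" using arange that unfolding S_def by blast
    then show ?thesis by simp
  qed
  define e where "e = e_ik m a p i"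
  define G where "G = PP x S e"
  define N where "N = p * j"
  have N1: "N \<ge> 1" using p2 j1 by (simp add: N_def)
  have charN: "(of_nat N :: 'k) = 0" unfolding N_def using char by (simp add: of_nat_eq_0_iff_char_dvd)
  have charm: "(of_nat m :: 'k) \<noteq> 0" using char pm by (simp add: of_nat_eq_0_iff_char_dvd)
  define P0 where "P0 = poly_shift N G"
  define f1 where "f1 = nat (ftau m r a (- int n1))"
  define sc where "sc = (\<Sum>k\<in>S. n1 * a k mod m)"
  have dEsc: "degree (En m r a x n1) = sc" unfolding En_def sc_def S_def by (simp add: degree_PP)
  have scdvd: "m dvd sc"
  proof -
    have "sc mod m = (\<Sum>k\<in>S. n1 * a k) mod m" unfolding sc_def by (rule mod_sum_eq)
    also have "\<dots> = (n1 * (\<Sum>k\<in>S. a k)) mod m" by (simp add: sum_distrib_left)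
    also have "\<dots> = 0" using asum unfolding S_def by (metis mod_mult_right_eq mult_0_right mod_0)
    finally show ?thesis by (simp add: mod_eq_0_iff_dvd)
  qed
  have scpos: "sc > 0"
  proof -
    have "1 \<in> S" using r3 by (simp add: S_def)
    then have "n1 * a 1 mod m > 0" using ck by blast
    moreover have "n1 * a 1 mod m \<le> sc" unfolding sc_def using fin \<open>1 \<in> S\<close> by (intro member_le_sum) auto
    ultimately show ?thesis by linarith
  qed
  have ftau1: "ftau m r a (- int n1) = -1 + int (sc div m)"
  proof -
    have "(\<Sum>k\<in>{1..r}. (- (- int n1) * int (a k)) mod int m) = int sc"
      unfolding sc_def S_def by (simp add: zmod_int)
    then show ?thesis unfolding ftau_def by (simp add: zdiv_int)
  qed
  have dE: "degree (En m r a x n1) = m * (f1 + 1)"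
  proof -
    obtain M where M: "sc = m * M" using scdvd by blast
    have "M \<ge> 1" using M scpos by (cases M) auto
    then have "f1 = M - 1" unfolding f1_def ftau1 using M m0 by simp
    then show ?thesis using dEsc M \<open>M \<ge> 1\<close> by simp
  qed
  define R where "R = (vcoef m r a x i / Xf ^ j) ^ p * Fract (hpoly r a x ^ (p * i div m)) 1"
  have polyR: "hpoly r a x ^ (p * i div m) * Dn m r a x n1 = G * Dn m r a x i ^ p"
    unfolding hpoly_PP Dn_def G_def e_def PP_power PP_mult n1_def S_def
    by (rule PP_cong) (simp add: e_ik_def exp_id[OF m0])
  have Req: "R = Fract G (Dn m r a x n1 * [:0,1:] ^ N)"
  proof -
    have e1: "fr (hpoly r a x ^ (p * i div m)) * fr (Dn m r a x n1) = fr G * fr (Dn m r a x i) ^ p"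
      using arg_cong[OF polyR, of fr] by (simp add: fr_mult fr_power)
    have nz: "fr (Dn m r a x i) \<noteq> 0" "fr (Dn m r a x n1) \<noteq> 0" "fr [:0,1::'k:] \<noteq> 0"
      by (simp_all add: fr_eq_0_iff Dn_nz)
    have "R = ((1 / fr (Dn m r a x i)) / fr [:0,1:] ^ j) ^ p * fr (hpoly r a x ^ (p * i div m))"
      unfolding R_def vcoef_Dn Xf_def Fract_fr by (simp only: fr_1 div_by_1 fr_def[symmetric])
    also have "\<dots> = fr (hpoly r a x ^ (p * i div m)) / (fr (Dn m r a x i) ^ p * fr [:0,1:] ^ N)"
      unfolding N_def by (rule powdiv)
    also have "\<dots> = fr G / (fr (Dn m r a x n1) * fr [:0,1:] ^ N)"
    proof (subst frac_eq_eq)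
      show "fr (Dn m r a x i) ^ p * fr [:0,1:] ^ N \<noteq> 0" using nz by simp
      show "fr (Dn m r a x n1) * fr [:0,1:] ^ N \<noteq> 0" using nz by simp
      show "fr (hpoly r a x ^ (p * i div m)) * (fr (Dn m r a x n1) * fr [:0,1:] ^ N) =
            fr G * (fr (Dn m r a x i) ^ p * fr [:0,1:] ^ N)"
        by (simp only: mult.assoc[symmetric] e1)
    qed
    finally show ?thesis by (simp add: Fract_fr fr_simps)
  qed
  have proj: "proj1 m r a x n1 R = Fract P0 (Dn m r a x n1)"
    using proj1_val[OF inj m0 f1_def dE Req] by (simp add: P0_def)
  define n2 where "n2 = (m - n1) mod m"
  have n2eq: "n2 = m - n1" unfolding n2_def using n1pos n1m by simp
  have n12: "(n1 + n2) div m = 1" using n2eq n1m m0 by simp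
  define H where "H = (\<Prod>s\<in>S. lin x s)"
  define Hk where "Hk k = (\<Prod>s\<in>S - {k}. lin x s)" for k
  define b where "b k = n1 * a k div m" for k
  define LD where "LD = (\<Sum>k\<in>S. smult (of_nat (b k)) (Hk k))"
  define Lh where "Lh = (\<Sum>k\<in>S. smult (of_nat (a k)) (Hk k))"
  define Le where "Le = (\<Sum>k\<in>S. smult (of_nat (e k)) (Hk k))"
  have H_PP: "H = PP x S (\<lambda>_. 1)" by (simp add: H_def PP_def)
  have H0: "H \<noteq> 0" by (simp add: H_PP PP_nonzero)
  have hD: "hpoly r a x = Dn m r a x n1 * Dn m r a x n2 * H"
    unfolding hpoly_PP Dn_def H_PP PP_mult S_def[symmetric]
  proof (rule PP_cong)
    fix k assume k: "k \<in> S"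
    show "a k = n1 * a k div m + n2 * a k div m + 1"
      using n2div[OF n1m apos[OF k] ck[OF k]] n2eq by simp
  qed
  have dD: "pderiv (Dn m r a x n1) * H = Dn m r a x n1 * LD"
    unfolding Dn_def H_def LD_def Hk_def b_def S_def[symmetric] by (rule logder_PP[OF fin])
  have dh: "pderiv (hpoly r a x) * H = hpoly r a x * Lh"
    unfolding hpoly_PP H_def Lh_def Hk_def S_def[symmetric] by (rule logder_PP[OF fin])
  have coefL: "(of_nat n1 * of_nat (a k) :: 'k) = of_nat m * (of_nat (b k) - of_nat (e k))" if "k \<in> S" for k
  proof -
    have nat1: "n1 * a k = m * b k + n1 * a k mod m" by (simp add: b_def)
    have nat2: "n1 * a k mod m + m * e k = p * (i * a k mod m)"
      unfolding n1_def e_def e_ik_def using ce_id[OF m0, of p i "a k"] by (simp add: mult.assoc)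
    have "(of_nat (p * (i * a k mod m)) :: 'k) = 0" using char by (simp add: of_nat_eq_0_iff_char_dvd)
    then have c: "(of_nat (n1 * a k mod m) :: 'k) = - (of_nat m * of_nat (e k))"
      using arg_cong[OF nat2, of "of_nat :: nat \<Rightarrow> 'k"] by (simp add: eq_neg_iff_add_eq_0)
    have "(of_nat n1 * of_nat (a k) :: 'k) = of_nat (n1 * a k)" by simp
    also have "\<dots> = of_nat m * of_nat (b k) + of_nat (n1 * a k mod m)"
      by (subst nat1) simp
    also have "\<dots> = of_nat m * (of_nat (b k) - of_nat (e k))" unfolding c by (simp add: algebra_simps)
    finally show ?thesis .
  qed
  have L: "smult (of_nat n1) Lh = smult (of_nat m) (LD - Le)"
  proof -
    have "smult (of_nat n1) Lh = (\<Sum>k\<in>S. smult (of_nat n1 * of_nat (a k)) (Hk k))"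
      unfolding Lh_def smult_sumr by simp
    also have "\<dots> = (\<Sum>k\<in>S. smult (of_nat m * (of_nat (b k) - of_nat (e k))) (Hk k))"
      by (intro sum.cong refl) (simp add: coefL)
    also have "\<dots> = smult (of_nat m) (LD - Le)"
      unfolding LD_def Le_def smult_sumr sum_subtractf[symmetric]
      by (intro sum.cong refl) (simp add: smult_diff_right right_diff_distrib smult_diff_left)
    finally show ?thesis .
  qed
  have Pfv: "(fract_deriv (Fract P0 (Dn m r a x n1)) + Fract P0 (Dn m r a x n1) *
               Fract (smult (of_nat n1) (pderiv (hpoly r a x))) (smult (of_nat m) (hpoly r a x)))
             * Fract 1 (Dn m r a x n2) * Fract (hpoly r a x) 1 = fr (H * pderiv P0 - P0 * Le)"
    by (rule Pf_val[OF Dn_nz Dn_nz H0 charm hD dD dh L])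
  have psi: "psi_coeff m r a x p i j j' = coeff (H * pderiv P0 - P0 * Le) (j' - 1)"
  proof -
    have "(THE P. fr (H * pderiv P0 - P0 * Le) = Fract P 1) = H * pderiv P0 - P0 * Le"
      by (rule the_equality) (simp_all add: fr_def eq_fract)
    then show ?thesis
      unfolding psi_coeff_def Let_def n1_def[symmetric]
      unfolding R_def[symmetric]
      unfolding proj dhom_def n2_def[symmetric]
      unfolding vcoef_Dn n12 power_one_right
      unfolding Pfv by simp
  qed
  define rr where "rr k = coeff (PP x S (\<lambda>s. if s = k then e s - 1 else e s)) (N - 1)" for k
  have Pfin: "H * pderiv P0 - P0 * Le = - (\<Sum>k\<in>S. smult (of_nat (e k) * rr k) (Hk k))"
  proof -
    have "P0 * Le = (\<Sum>k\<in>S. smult (of_nat (e k)) (P0 * Hk k))"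
      unfolding Le_def by (simp add: sum_distrib_left mult_smult_right)
    then show ?thesis
      using partE[OF fin N1 charN, of x e] unfolding H_def Hk_def P0_def G_def rr_def by simp
  qed
  have "psi_coeff m r a x p i j j' = - (\<Sum>k\<in>S. of_nat (e k) * rr k * coeff (Hk k) (j' - 1))"
    unfolding psi Pfin by (simp add: coeff_sum)
  also have "\<dots> = - (\<Sum>k\<in>S. of_nat (e_ik m a p i k) * r_coeff m r a x p i j k * q_coeff r x j' k)"
  proof -
    have "of_nat (e k) * rr k * coeff (Hk k) (j' - 1) = of_nat (e_ik m a p i k) * r_coeff m r a x p i j k * q_coeff r x j' k"
      if k: "k \<in> S" for k
    proof (cases "e k = 0")
      case True then show ?thesis by (simp add: e_def)
    next
      case False
      have "rr k = r_coeff m r a x p i j k"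
        unfolding rr_def r_coeff_def using r_coeff_eq[OF fin k _ N1, of e x] False
        by (simp add: S_def N_def e_def)
      moreover have "coeff (Hk k) (j' - 1) = q_coeff r x j' k"
        by (simp add: Hk_def q_coeff_def lin_def S_def)
      ultimately show ?thesis by (simp add: e_def)
    qed
    then show ?thesis by simp
  qed
  finally show ?thesis by (simp add: S_def)
qed

end
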